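(* Let $(c_i)_{i\ge0}$, $(b'_i)_{i\ge0}$, $(c'_i)_{i\ge0}$ be sequences of non-negative reals and let $L,R>0$ and $0<\epsilon<1$. Suppose that for all $i$: $b'_{i+1}\le b'_i+L(b'_ic_i+c'_i)$, $c'_{i+1}\le L(b'_ic_i+c'_i)c_i$, $c_{i+1}\le Rc_i^2$, and $c_i\le c'_i$; and that there is an index $I$ with $c_i\le\epsilon^{2^{(i-I)}}$ for all $i\ge I$. Then: (a) $(b'_i)$ is bounded; (b) there is $R'>0$ with $c'_{i+1}\le R'(c'_i)^2$ for all $i$; (c) there is an index $I'\ge I$ with $c'_i\le\epsilon^{2^{(i-I')}}$ for all $i\ge I'$. *)

theory Defs
  imports Complex_Main
begin

end

theory Submission
  imports Defs
begin

theorem lemma5p3: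
  fixes c b' c' :: "nat \<Rightarrow> real" and L R \<epsilon> :: real and I :: nat
  assumes c_nn: "\<And>i. c i \<ge> 0"
    and b'_nn: "\<And>i. b' i \<ge> 0"
    and c'_nn: "\<And>i. c' i \<ge> 0"
    and L_pos: "L > 0" and R_pos: "R > 0"
    and eps_pos: "0 < \<epsilon>" and eps_lt1: "\<epsilon> < 1"
    and rec_b: "\<And>i. b' (Suc i) \<le> b' i + L * (b' i * c i + c' i)"
    and rec_c': "\<And>i. c' (Suc i) \<le> L * (b' i * c i + c' i) * c i"
    and rec_c: "\<And>i. c (Suc i) \<le> R * (c i)\<^sup>2"
    and c_le: "\<And>i. c i \<le> c' i"
    and decay: "\<And>i. i \<ge> I \<Longrightarrow> c i \<le> \<epsilon> ^ (2 ^ (i - I))"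
  shows "(\<exists>B. \<forall>i. \<bar>b' i\<bar> \<le> B) \<and>
         (\<exists>R'>0. \<forall>i. c' (Suc i) \<le> R' * (c' i)\<^sup>2) \<and>
         (\<exists>I'\<ge>I. \<forall>i\<ge>I'. c' i \<le> \<epsilon> ^ (2 ^ (i - I')))"
proof -
  have cI: "c j \<le> \<epsilon> ^ (j - I)" if "j \<ge> I" for j
  proof -
    have "(j - I) \<le> 2 ^ (j - I)" by simp
    then have "\<epsilon> ^ (2 ^ (j - I)) \<le> \<epsilon> ^ (j - I)"
      using eps_pos eps_lt1 by (intro power_decreasing) auto
    with decay[OF that] show ?thesis by linarith
  qed
  have c1: "c j \<le> 1" if "j \<ge> I" for j
    using cI[OF that] eps_pos eps_lt1 by (meson less_imp_le order_trans power_le_one)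
  define a where "a j = L * c j + 2 * L^2 * (c j)^2" for j
  have a_nn: "a j \<ge> 0" for j unfolding a_def using c_nn[of j] L_pos by simp
  have suma: "summable a"
  proof (rule summable_comparison_test_ev)
    show "eventually (\<lambda>j. norm (a j) \<le> (L + 2 * L^2) / \<epsilon>^I * \<epsilon>^j) sequentially"
      unfolding eventually_sequentially
    proof (intro exI allI impI)
      fix j assume j: "I \<le> j"
      have sq: "(c j)^2 \<le> c j" using c1[OF j] c_nn[of j] by (simp add: power2_eq_square mult_left_le)
      have "a j \<le> (L + 2 * L^2) * c j" unfolding a_def using sq L_pos
        by (simp add: algebra_simps)
      also have "\<dots> \<le> (L + 2 * L^2) * \<epsilon>^(j - I)"
        using cI[OF j] L_pos by (intro mult_left_mono) auto
      also have "\<epsilon>^(j - I) = \<epsilon>^j / \<epsilon>^I" using j eps_pos by (simp add: power_diff)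
      finally show "norm (a j) \<le> (L + 2 * L^2) / \<epsilon>^I * \<epsilon>^j" using a_nn[of j] by simp
    qed
    show "summable (\<lambda>j. (L + 2 * L^2) / \<epsilon>^I * \<epsilon>^j)"
      using eps_pos eps_lt1 by (intro summable_mult summable_geometric) auto
  qed
  define s where "s i = b' i + 2 * L * c' i" for i
  have s_nn: "s i \<ge> 0" for i unfolding s_def using b'_nn[of i] c'_nn[of i] L_pos by simp
  have s_step: "s (Suc i) \<le> s i * (1 + a i)" for i
  proof -
    have "s (Suc i) \<le> b' i + L * (b' i * c i + c' i) + 2 * L * (L * (b' i * c i + c' i) * c i)"
      unfolding s_def using rec_b[of i] rec_c'[of i] L_pos by (smt (verit) mult_left_mono)
    also have "\<dots> \<le> s i * (1 + a i)"
    proof -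
      have "c' i * L \<le> c' i * 2 * L" using c'_nn[of i] L_pos by simp
      moreover have "0 \<le> c' i * (2 * L * (L * c i + 2 * L^2 * (c i)^2))"
        using c'_nn[of i] L_pos c_nn[of i] by simp
      moreover have "0 \<le> L * (L * (L * (c i * (c i * (c' i * 4)))))"
        using c'_nn[of i] L_pos c_nn[of i] by simp
      ultimately show ?thesis unfolding s_def a_def
        by (simp add: algebra_simps power2_eq_square)
    qed
    finally show ?thesis .
  qed
  have s_bound: "s i \<le> s 0 * exp (\<Sum>j<i. a j)" for i
  proof (induction i)
    case 0 then show ?case by simp
  next
    case (Suc i)
    have "s (Suc i) \<le> s i * (1 + a i)" by (rule s_step)
    also have "\<dots> \<le> s 0 * exp (\<Sum>j<i. a j) * exp (a i)"
      using Suc s_nn[of i] a_nn[of i] exp_ge_add_one_self[of "a i"]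
      by (intro mult_mono) auto
    also have "\<dots> = s 0 * exp (\<Sum>j<Suc i. a j)" by (simp add: exp_add)
    finally show ?case .
  qed
  define S where "S = s 0 * exp (suminf a)"
  have sS: "s i \<le> S" for i
  proof -
    have "(\<Sum>j<i. a j) \<le> suminf a" using suma a_nn by (intro sum_le_suminf) auto
    then have "s 0 * exp (\<Sum>j<i. a j) \<le> S" unfolding S_def using s_nn[of 0]
      by (intro mult_left_mono) auto
    with s_bound[of i] show ?thesis by linarith
  qed
  define B where "B = S"
  define C where "C = S / (2 * L)"
  have bB: "b' i \<le> B" for i using sS[of i] c'_nn[of i] L_pos unfolding s_def B_def
    by (smt (verit) mult_nonneg_nonneg)
  have B_nn: "B \<ge> 0" using bB[of 0] b'_nn[of 0] by linarith
  have cC: "c' i \<le> C" for i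
  proof -
    have "2 * L * c' i \<le> S" using sS[of i] b'_nn[of i] unfolding s_def by simp
    then show ?thesis unfolding C_def using L_pos by (simp add: field_simps)
  qed
  have C_nn: "C \<ge> 0" using cC[of 0] c'_nn[of 0] by linarith
  define R2 where "R2 = L * (B + 1) + 1"
  have R2_ge: "R2 \<ge> 1" unfolding R2_def using L_pos B_nn by simp
  have partb: "c' (Suc i) \<le> R2 * (c' i)\<^sup>2" for i
  proof -
    have "b' i * c i \<le> B * c' i"
      using bB[of i] c_le[of i] b'_nn[of i] c_nn[of i] B_nn by (intro mult_mono) auto
    then have "b' i * c i + c' i \<le> (B + 1) * c' i" by (simp add: algebra_simps)
    then have "L * (b' i * c i + c' i) * c i \<le> L * ((B + 1) * c' i) * c' i"
      using L_pos c_nn[of i] c_le[of i] b'_nn[of i] c'_nn[of i] B_nn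
      by (intro mult_mono) auto
    also have "\<dots> \<le> R2 * (c' i)\<^sup>2" unfolding R2_def
      by (simp add: power2_eq_square algebra_simps)
    finally show ?thesis using rec_c'[of i] by linarith
  qed
  define \<delta> where "\<delta> = \<epsilon> / (R2 * L * (B + C) + 1)"
  have den_pos: "R2 * L * (B + C) + 1 > 0" using R2_ge L_pos B_nn C_nn
    by (smt (verit) mult_nonneg_nonneg)
  have \<delta>_pos: "\<delta> > 0" unfolding \<delta>_def using eps_pos den_pos by simp
  obtain n where n: "\<epsilon> ^ n < \<delta>" using real_arch_pow_inv[OF \<delta>_pos eps_lt1] by blast
  define j where "j = I + n"
  have cj: "c j < \<delta>" using cI[of j] n unfolding j_def by simp
  have cj1: "c j \<le> 1" using c1[of j] unfolding j_def by simp
  define J where "J = Suc j"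
  have J0: "R2 * c' J \<le> \<epsilon>"
  proof -
    have "b' j * c j + c' j \<le> B + C" using bB[of j] cC[of j] cj1 b'_nn[of j] c_nn[of j]
      by (smt (verit) mult_left_le)
    then have "c' J \<le> L * (B + C) * c j" using rec_c'[of j] L_pos c_nn[of j] unfolding J_def
      by (smt (verit) mult_right_mono mult_left_mono mult.assoc)
    then have "R2 * c' J \<le> R2 * L * (B + C) * c j" using R2_ge
      by (smt (verit) mult_left_mono mult.assoc)
    also have "\<dots> \<le> \<epsilon>"
    proof -
      have "c j * (R2 * L * (B + C) + 1) \<le> \<epsilon>" using cj den_pos unfolding \<delta>_def
        by (simp add: field_simps)
      then show ?thesis using c_nn[of j] by (simp add: algebra_simps)
    qed
    finally show ?thesis .
  qed
  have indk: "R2 * c' (J + k) \<le> \<epsilon> ^ (2 ^ k)" for k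
  proof (induction k)
    case 0 then show ?case using J0 by simp
  next
    case (Suc k)
    have "R2 * c' (J + Suc k) \<le> R2 * (R2 * (c' (J + k))\<^sup>2)"
      using partb[of "J + k"] R2_ge by simp
    also have "\<dots> = (R2 * c' (J + k))^2" by (simp add: power2_eq_square)
    also have "\<dots> \<le> (\<epsilon> ^ (2 ^ k))^2"
      using Suc R2_ge c'_nn[of "J + k"] by (intro power_mono) auto
    also have "\<dots> = \<epsilon> ^ (2 ^ Suc k)" by (simp add: power_mult[symmetric] mult.commute)
    finally show ?case .
  qed
  have partc: "\<forall>i\<ge>J. c' i \<le> \<epsilon> ^ (2 ^ (i - J))"
  proof (intro allI impI)
    fix i assume "J \<le> i"
    then have "R2 * c' i \<le> \<epsilon> ^ (2 ^ (i - J))" using indk[of "i - J"] by simp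
    moreover have "c' i \<le> R2 * c' i" using R2_ge c'_nn[of i] by (simp add: mult_le_cancel_right1)
    ultimately show "c' i \<le> \<epsilon> ^ (2 ^ (i - J))" by linarith
  qed
  have "J \<ge> I" unfolding J_def j_def by simp
  show ?thesis
  proof (intro conjI)
    show "\<exists>B. \<forall>i. \<bar>b' i\<bar> \<le> B" using bB b'_nn by (metis abs_of_nonneg)
    show "\<exists>R'>0. \<forall>i. c' (Suc i) \<le> R' * (c' i)\<^sup>2" using partb R2_ge
      by (intro exI[of _ R2]) auto
    show "\<exists>I'\<ge>I. \<forall>i\<ge>I'. c' i \<le> \<epsilon> ^ (2 ^ (i - I'))" using partc \<open>J \<ge> I\<close> by blast
  qed
qed

end
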